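(* Let $(G,\sigma)$ be a connection graph and $i\neq j\in V$, and write $\mathcal{C}^\sigma(i,j)=\begin{bmatrix}\mathcal{C}^\sigma_{ii}&\mathcal{C}^\sigma_{ij}\\ \mathcal{C}^\sigma_{ji}&\mathcal{C}^\sigma_{jj}\end{bmatrix}$. Then $$\mathcal{C}^\sigma(i,j)/\mathcal{C}^\sigma_{jj}=\deg(i)(I_{d\times d}-\Omega^1_i)\quad\text{and}\quad \mathcal{C}^\sigma(i,j)/\mathcal{C}^\sigma_{ii}=\deg(j)(I_{d\times d}-\Omega^1_j).$$
   Context: A connection graph $(G,\sigma)$: finite connected weighted graph $G=(V,E,W)$, $V=\{1,\dots,n\}$, $w_{xy}>0$ iff $\{x,y\}\in E$, $\deg(x)=\sum_y w_{xy}$, and $\sigma$ mapping oriented edges to $\mathsf{O}(d)$ with $\sigma_{yx}=\sigma_{xy}^{\mathrm T}$. Connection Laplacian $\mathcal{L}$: $nd\times nd$ block matrix with blocks $\deg(x)I_d$ on the diagonal, $-w_{xy}\sigma_{xy}$ for $x\sim y$, $0$ otherwise. For a block matrix $M=\begin{bmatrix}A&B\\C&D\end{bmatrix}$ with $A,D$ square, $M/A=D-CA^\dagger B$ and $M/D=A-BD^\dagger C$. The conductance matrix $\mathcal{C}^\sigma(i,j)=\mathcal{L}/\mathcal{L}_{\{i,j\}^c,\{i,j\}^c}$, blocks ordered $i$ then $j$. $(X_t)$: simple random walk with transition probabilities $w_{xy}/\deg(x)$; $T^1_i=\inf\{t\ge1:X_t=i\}$; $\Omega^1_i=\mathbb{E}\big[\prod_{\ell=1}^{T^1_i}\sigma_{X_{\ell-1}X_\ell}\mid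 X_0=i\big]$ (ordered product). *)

theory Defs
  imports "HOL-Analysis.Analysis"
begin

text \<open>Matrices are represented as functions on an index type, restricted to explicit
finite index sets. The nd x nd connection Laplacian is indexed by pairs (vertex, component),
with components in {0..<d}.\<close>

definition comps :: "nat \<Rightarrow> nat set" where
  "comps d = {0..<d}"

definition orth_mat :: "nat \<Rightarrow> (nat \<Rightarrow> nat \<Rightarrow> real) \<Rightarrow> bool" where
  "orth_mat d M \<longleftrightarrow> (\<forall>a<d. \<forall>b<d. (\<Sum>k<d. M k a * M k b) = (if a = b then 1 else 0))"

definition edges_of :: "'v set \<Rightarrow> ('v \<Rightarrow> 'v \<Rightarrow> real) \<Rightarrow> ('v \<times> 'v) set" where
  "edges_of V w = {(x, y). x \<in> V \<and> y \<in> V \<and> w x y > 0}"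

definition connection_graph ::
  "'v set \<Rightarrow> ('v \<Rightarrow> 'v \<Rightarrow> real) \<Rightarrow> nat \<Rightarrow> ('v \<Rightarrow> 'v \<Rightarrow> nat \<Rightarrow> nat \<Rightarrow> real) \<Rightarrow> bool" where
  "connection_graph V w d \<sigma> \<longleftrightarrow>
     finite V \<and> V \<noteq> {} \<and>
     (\<forall>x y. w x y = w y x) \<and> (\<forall>x y. w x y \<ge> 0) \<and> (\<forall>x. w x x = 0) \<and>
     (\<forall>x y. (x \<notin> V \<or> y \<notin> V) \<longrightarrow> w x y = 0) \<and>
     (\<forall>x\<in>V. \<forall>y\<in>V. (x, y) \<in> (edges_of V w)\<^sup>*) \<and>
     (\<forall>x y. (x, y) \<in> edges_of V w \<longrightarrow>
         orth_mat d (\<sigma> x y) \<and> (\<forall>a b. \<sigma> y x a b = \<sigma> x y b a))"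

definition deg :: "'v set \<Rightarrow> ('v \<Rightarrow> 'v \<Rightarrow> real) \<Rightarrow> 'v \<Rightarrow> real" where
  "deg V w x = (\<Sum>y\<in>V. w x y)"

definition conn_laplacian ::
  "'v set \<Rightarrow> ('v \<Rightarrow> 'v \<Rightarrow> real) \<Rightarrow> ('v \<Rightarrow> 'v \<Rightarrow> nat \<Rightarrow> nat \<Rightarrow> real)
    \<Rightarrow> ('v \<times> nat) \<Rightarrow> ('v \<times> nat) \<Rightarrow> real" where
  "conn_laplacian V w \<sigma> p q =
     (if fst p = fst q then (if snd p = snd q then deg V w (fst p) else 0)
      else - w (fst p) (fst q) * \<sigma> (fst p) (fst q) (snd p) (snd q))"

definition mmul_on :: "'a set \<Rightarrow> ('a \<Rightarrow> 'a \<Rightarrow> real) \<Rightarrow> ('a \<Rightarrow> 'a \<Rightarrow> real) \<Rightarrow> 'a \<Rightarrow> 'a \<Rightarrow> real" where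
  "mmul_on T A B = (\<lambda>x y. \<Sum>k\<in>T. A x k * B k y)"

definition is_pinv_on :: "'a set \<Rightarrow> ('a \<Rightarrow> 'a \<Rightarrow> real) \<Rightarrow> ('a \<Rightarrow> 'a \<Rightarrow> real) \<Rightarrow> bool" where
  "is_pinv_on T A P \<longleftrightarrow>
     (\<forall>x y. (x \<notin> T \<or> y \<notin> T) \<longrightarrow> P x y = 0) \<and>
     (\<forall>x\<in>T. \<forall>y\<in>T. mmul_on T (mmul_on T A P) A x y = A x y) \<and>
     (\<forall>x\<in>T. \<forall>y\<in>T. mmul_on T (mmul_on T P A) P x y = P x y) \<and>
     (\<forall>x\<in>T. \<forall>y\<in>T. mmul_on T A P x y = mmul_on T A P y x) \<and>
     (\<forall>x\<in>T. \<forall>y\<in>T. mmul_on T P A x y = mmul_on T P A y x)"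

definition pinv_on :: "'a set \<Rightarrow> ('a \<Rightarrow> 'a \<Rightarrow> real) \<Rightarrow> 'a \<Rightarrow> 'a \<Rightarrow> real" where
  "pinv_on T A = (THE P. is_pinv_on T A P)"

text \<open>Schur complement M / M_{T,T}: for a block matrix with the complementary block indexed
by T, the entries (x,y) outside T give A - B (M_{T,T})^+ C.\<close>

definition schur :: "'a set \<Rightarrow> ('a \<Rightarrow> 'a \<Rightarrow> real) \<Rightarrow> 'a \<Rightarrow> 'a \<Rightarrow> real" where
  "schur T M = (\<lambda>x y. M x y - (\<Sum>k\<in>T. \<Sum>l\<in>T. M x k * pinv_on T M k l * M l y))"

text \<open>Conductance matrix C(i,j) = L / L_{{i,j}^c,{i,j}^c}, read on ({i,j} x [d]) squared.\<close>

definition conductance ::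
  "'v set \<Rightarrow> ('v \<Rightarrow> 'v \<Rightarrow> real) \<Rightarrow> nat \<Rightarrow> ('v \<Rightarrow> 'v \<Rightarrow> nat \<Rightarrow> nat \<Rightarrow> real) \<Rightarrow> 'v \<Rightarrow> 'v
    \<Rightarrow> ('v \<times> nat) \<Rightarrow> ('v \<times> nat) \<Rightarrow> real" where
  "conductance V w d \<sigma> i j = schur ((V - {i, j}) \<times> comps d) (conn_laplacian V w \<sigma>)"

fun path_prob :: "'v set \<Rightarrow> ('v \<Rightarrow> 'v \<Rightarrow> real) \<Rightarrow> 'v \<Rightarrow> 'v list \<Rightarrow> real" where
  "path_prob V w x [] = 1"
| "path_prob V w x (y # ys) = w x y / deg V w x * path_prob V w y ys"

fun path_hol :: "nat \<Rightarrow> ('v \<Rightarrow> 'v \<Rightarrow> nat \<Rightarrow> nat \<Rightarrow> real) \<Rightarrow> 'v \<Rightarrow> 'v list \<Rightarrow> nat \<Rightarrow> nat \<Rightarrow> real" where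
  "path_hol d \<sigma> x [] = (\<lambda>a b. if a = b then 1 else 0)"
| "path_hol d \<sigma> x (y # ys) = (\<lambda>a b. \<Sum>k<d. \<sigma> x y a k * path_hol d \<sigma> y ys k b)"

text \<open>Excursions from i: the sequences X_1..X_T with T = T^1_i the first return time.\<close>

definition excursions :: "'v set \<Rightarrow> 'v \<Rightarrow> 'v list set" where
  "excursions V i = {xs. xs \<noteq> [] \<and> set xs \<subseteq> V \<and> last xs = i \<and> i \<notin> set (butlast xs)}"

text \<open>Omega^1_i = E[ prod_{l=1}^{T^1_i} sigma_{X_{l-1} X_l} | X_0 = i ], entrywise, written as
the sum over all excursions of (probability of the excursion) * (holonomy along it).\<close>

definition Omega1 ::
  "'v set \<Rightarrow> ('v \<Rightarrow> 'v \<Rightarrow> real) \<Rightarrow> nat \<Rightarrow> ('v \<Rightarrow> 'v \<Rightarrow> nat \<Rightarrow> nat \<Rightarrow> real) \<Rightarrow> 'v \<Rightarrow> nat \<Rightarrow> nat \<Rightarrow> real" where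
  "Omega1 V w d \<sigma> i a b =
     infsum (\<lambda>xs. path_prob V w i xs * path_hol d \<sigma> i xs a b) (excursions V i)"

end

theory Submission
  imports Defs "Jordan_Normal_Form.Gauss_Jordan_Elimination" "Jordan_Normal_Form.Determinant"
begin

lemma inv_exists:
  fixes A :: "'a \<Rightarrow> 'a \<Rightarrow> real"
  assumes fin: "finite T"
    and inj: "\<And>f. (\<forall>p\<in>T. (\<Sum>q\<in>T. A p q * f q) = 0) \<Longrightarrow> \<forall>q\<in>T. f q = 0"
  shows "\<exists>B. (\<forall>x y. (x \<notin> T \<or> y \<notin> T) \<longrightarrow> B x y = 0) \<and>
             (\<forall>x\<in>T. \<forall>y\<in>T. (\<Sum>k\<in>T. A x k * B k y) = (if x = y then 1 else 0)) \<and>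
             (\<forall>x\<in>T. \<forall>y\<in>T. (\<Sum>k\<in>T. B x k * A k y) = (if x = y then 1 else 0))"
proof -
  define n where "n = card T"
  obtain g where g: "bij_betw g {0..<n} T" using ex_bij_betw_nat_finite[OF fin] n_def by blast
  define h where "h = inv_into {0..<n} g"
  have hg: "\<And>r. r < n \<Longrightarrow> h (g r) = r" using g unfolding h_def
    by (simp add: bij_betw_def inv_into_f_f)
  have gh: "\<And>x. x \<in> T \<Longrightarrow> g (h x) = x" using g unfolding h_def
    by (meson bij_betw_inv_into_right)
  have hT: "\<And>x. x \<in> T \<Longrightarrow> h x < n" using g unfolding h_def
    by (metis atLeastLessThan_iff bij_betw_def inv_into_into)
  have gT: "\<And>r. r < n \<Longrightarrow> g r \<in> T" using g by (auto simp: bij_betw_def)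
  have reidx: "\<And>F. (\<Sum>q\<in>T. F q) = (\<Sum>c<n. F (g c))"
    using sum.reindex_bij_betw[OF g] by (metis atLeast0LessThan)
  define M :: "real mat" where "M = mat n n (\<lambda>(r,c). A (g r) (g c))"
  have Mc: "M \<in> carrier_mat n n" unfolding M_def by simp
  have "det M \<noteq> 0"
  proof
    assume "det M = 0"
    then obtain v where v: "v \<in> carrier_vec n" "v \<noteq> 0\<^sub>v n" "M *\<^sub>v v = 0\<^sub>v n"
      using det_0_iff_vec_prod_zero[OF Mc] by blast
    define f where "f q = v $ (h q)" for q
    have "\<forall>p\<in>T. (\<Sum>q\<in>T. A p q * f q) = 0"
    proof
      fix p assume p: "p \<in> T"
      have "(\<Sum>q\<in>T. A p q * f q) = (\<Sum>c<n. A p (g c) * v $ c)"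
        by (simp add: reidx f_def hg)
      also have "\<dots> = (M *\<^sub>v v) $ h p"
        using v(1) hT[OF p] gh[OF p] unfolding M_def
        by (auto simp: mult_mat_vec_def scalar_prod_def atLeast0LessThan intro!: sum.cong)
      also have "\<dots> = 0" using v(3) hT[OF p] by simp
      finally show "(\<Sum>q\<in>T. A p q * f q) = 0" .
    qed
    then have "\<forall>q\<in>T. f q = 0" by (rule inj)
    then have "\<forall>c<n. v $ c = 0" unfolding f_def using gT hg by force
    then have "v = 0\<^sub>v n"
      using v(1) by (intro eq_vecI) simp_all
    with v(2) show False by simp
  qed
  then have "M \<in> Units (ring_mat TYPE(real) n undefined)"
    by (rule det_non_zero_imp_unit[OF Mc])
  then obtain N where N: "M * N = 1\<^sub>m n" "N * M = 1\<^sub>m n" "N \<in> carrier_mat n n"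
    proof (cases "mat_inverse M")
    case None
    then show ?thesis using mat_inverse(1)[OF Mc None, of "()"] det_non_zero_imp_unit[OF Mc \<open>det M \<noteq> 0\<close>, of "()"] by blast
  next
    case (Some N)
    then show ?thesis using mat_inverse(2)[OF Mc Some] that by blast
  qed
  define B where "B x y = (if x \<in> T \<and> y \<in> T then N $$ (h x, h y) else 0)" for x y
  show ?thesis
  proof (intro exI conjI ballI allI impI)
    show "\<And>x y. x \<notin> T \<or> y \<notin> T \<Longrightarrow> B x y = 0" by (auto simp: B_def)
  next
    fix x y assume x: "x \<in> T" and y: "y \<in> T"
    have "(\<Sum>k\<in>T. A x k * B k y) = (\<Sum>c<n. M $$ (h x, c) * N $$ (c, h y))"
      using x y hT gT unfolding reidx B_def M_def by (auto simp: gh hg intro!: sum.cong)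
    also have "\<dots> = (M * N) $$ (h x, h y)"
      using Mc N(3) hT x y by (simp add: index_mult_mat scalar_prod_def atLeast0LessThan)
    also have "\<dots> = (if x = y then 1 else 0)" using N(1) hT x y
      by (metis gh index_one_mat(1))
    finally show "(\<Sum>k\<in>T. A x k * B k y) = (if x = y then 1 else 0)" .
  next
    fix x y assume x: "x \<in> T" and y: "y \<in> T"
    have "(\<Sum>k\<in>T. B x k * A k y) = (\<Sum>c<n. N $$ (h x, c) * M $$ (c, h y))"
      using x y hT gT unfolding reidx B_def M_def by (auto simp: gh hg intro!: sum.cong)
    also have "\<dots> = (N * M) $$ (h x, h y)"
      using Mc N(3) hT x y by (simp add: index_mult_mat scalar_prod_def atLeast0LessThan)
    also have "\<dots> = (if x = y then 1 else 0)" using N(2) hT x y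
      by (metis gh index_one_mat(1))
    finally show "(\<Sum>k\<in>T. B x k * A k y) = (if x = y then 1 else 0)" .
  qed
qed


definition idm :: "'a \<Rightarrow> 'a \<Rightarrow> real" where "idm x y = (if x = y then 1 else 0)"

lemma mmul_assoc: "mmul_on T (mmul_on T A B) C = mmul_on T A (mmul_on T B C)"
  unfolding mmul_on_def
  by (auto simp: fun_eq_iff sum_distrib_left sum_distrib_right mult.assoc intro: sum.swap)

lemma mmul_id_left: "finite T \<Longrightarrow> x \<in> T \<Longrightarrow> mmul_on T idm A x y = A x y"
proof -
  assume "finite T" "x \<in> T"
  have "mmul_on T idm A x y = (\<Sum>k\<in>T. if x = k then A k y else 0)"
    unfolding mmul_on_def idm_def by (rule sum.cong) auto
  then show ?thesis using \<open>finite T\<close> \<open>x \<in> T\<close> by simp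
qed

lemma mmul_id_right: "finite T \<Longrightarrow> y \<in> T \<Longrightarrow> mmul_on T A idm x y = A x y"
proof -
  assume "finite T" "y \<in> T"
  have "mmul_on T A idm x y = (\<Sum>k\<in>T. if k = y then A x k else 0)"
    unfolding mmul_on_def idm_def by (rule sum.cong) auto
  then show ?thesis using \<open>finite T\<close> \<open>y \<in> T\<close> by simp
qed

lemma mmul_cong: "(\<And>k. k \<in> T \<Longrightarrow> A x k = A' x k) \<Longrightarrow> (\<And>k. k \<in> T \<Longrightarrow> B k y = B' k y)
   \<Longrightarrow> mmul_on T A B x y = mmul_on T A' B' x y"
  unfolding mmul_on_def by (rule sum.cong) auto

lemma pinv_eq:
  assumes fin: "finite T"
    and B0: "\<forall>x y. (x \<notin> T \<or> y \<notin> T) \<longrightarrow> B x y = 0"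
    and AB: "\<forall>x\<in>T. \<forall>y\<in>T. (\<Sum>k\<in>T. A x k * B k y) = (if x = y then 1 else 0)"
    and BA: "\<forall>x\<in>T. \<forall>y\<in>T. (\<Sum>k\<in>T. B x k * A k y) = (if x = y then 1 else 0)"
  shows "pinv_on T A = B"
proof -
  have AB': "\<And>x y. x \<in> T \<Longrightarrow> y \<in> T \<Longrightarrow> mmul_on T A B x y = idm x y"
    using AB by (simp add: mmul_on_def idm_def)
  have BA': "\<And>x y. x \<in> T \<Longrightarrow> y \<in> T \<Longrightarrow> mmul_on T B A x y = idm x y"
    using BA by (simp add: mmul_on_def idm_def)
  have isB: "is_pinv_on T A B"
    unfolding is_pinv_on_def
  proof (intro conjI ballI)
    show "\<forall>x y. (x \<notin> T \<or> y \<notin> T) \<longrightarrow> B x y = 0" by fact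
  next
    fix x y assume "x \<in> T" "y \<in> T"
    then show "mmul_on T (mmul_on T A B) A x y = A x y"
      using mmul_cong[of T "mmul_on T A B" x idm A y A] AB' mmul_id_left[OF fin] by simp
  next
    fix x y assume "x \<in> T" "y \<in> T"
    then show "mmul_on T (mmul_on T B A) B x y = B x y"
      using mmul_cong[of T "mmul_on T B A" x idm B y B] BA' mmul_id_left[OF fin] by simp
  next
    fix x y assume "x \<in> T" "y \<in> T"
    then show "mmul_on T A B x y = mmul_on T A B y x" using AB' by (simp add: idm_def)
  next
    fix x y assume "x \<in> T" "y \<in> T"
    then show "mmul_on T B A x y = mmul_on T B A y x" using BA' by (simp add: idm_def)
  qed
  have uniq: "P = B" if P: "is_pinv_on T A P" for P
  proof -
    have P0: "\<forall>x y. (x \<notin> T \<or> y \<notin> T) \<longrightarrow> P x y = 0"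
      and APA: "\<forall>x\<in>T. \<forall>y\<in>T. mmul_on T (mmul_on T A P) A x y = A x y"
      using P unfolding is_pinv_on_def by auto
    have PA: "mmul_on T P A u y = idm u y" if u: "u \<in> T" and y: "y \<in> T" for u y
    proof -
      have "mmul_on T P A u y = mmul_on T idm (mmul_on T P A) u y"
        using mmul_id_left[OF fin u] by simp
      also have "\<dots> = mmul_on T (mmul_on T B A) (mmul_on T P A) u y"
        by (rule mmul_cong) (use BA' u in auto)
      also have "\<dots> = mmul_on T B (mmul_on T (mmul_on T A P) A) u y"
        by (simp add: mmul_assoc)
      also have "\<dots> = mmul_on T B A u y"
        by (rule mmul_cong) (use APA y in auto)
      also have "\<dots> = idm u y" using BA' u y by simp
      finally show ?thesis .
    qed
    show "P = B"
    proof (intro ext)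
      fix u v
      show "P u v = B u v"
      proof (cases "u \<in> T \<and> v \<in> T")
        case True
        have "P u v = mmul_on T P idm u v" using mmul_id_right[OF fin] True by simp
        also have "\<dots> = mmul_on T P (mmul_on T A B) u v"
          by (rule mmul_cong) (use AB' True in auto)
        also have "\<dots> = mmul_on T (mmul_on T P A) B u v" by (simp add: mmul_assoc)
        also have "\<dots> = mmul_on T idm B u v"
          by (rule mmul_cong) (use PA True in auto)
        also have "\<dots> = B u v" using mmul_id_left[OF fin] True by simp
        finally show ?thesis .
      next
        case False
        then show ?thesis using P0 B0 by auto
      qed
    qed
  qed
  show ?thesis unfolding pinv_on_def using isB uniq by (rule the_equality)
qed


lemma delta_sum: "finite A \<Longrightarrow> s \<in> A \<Longrightarrow> (\<Sum>t\<in>A. (if s = t then 1 else 0) * (f t::real)) = f s"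
proof -
  assume "finite A" "s \<in> A"
  have "(\<Sum>t\<in>A. (if s = t then 1 else 0) * f t) = (\<Sum>t\<in>A. if s = t then f t else 0)"
    by (rule sum.cong) auto
  then show ?thesis using \<open>finite A\<close> \<open>s \<in> A\<close> by simp
qed

lemma swap3: "(\<Sum>q\<in>J. \<Sum>k\<in>S. \<Sum>l\<in>S. f q k l) = (\<Sum>l\<in>S. \<Sum>k\<in>S. \<Sum>q\<in>J. f q k l)"
proof -
  have "(\<Sum>q\<in>J. \<Sum>k\<in>S. \<Sum>l\<in>S. f q k l) = (\<Sum>k\<in>S. \<Sum>q\<in>J. \<Sum>l\<in>S. f q k l)" by (rule sum.swap)
  also have "\<dots> = (\<Sum>k\<in>S. \<Sum>l\<in>S. \<Sum>q\<in>J. f q k l)" by (rule sum.cong[OF refl], rule sum.swap)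
  also have "\<dots> = (\<Sum>l\<in>S. \<Sum>k\<in>S. \<Sum>q\<in>J. f q k l)" by (rule sum.swap)
  finally show ?thesis .
qed

lemma schur_alg:
  fixes L B K C :: "'a \<Rightarrow> 'a \<Rightarrow> real" and Hv :: "'a \<Rightarrow> real"
  assumes fS: "finite S" and fJ: "finite J" and disj: "S \<inter> J = {}"
    and BL: "\<forall>s\<in>S. \<forall>t\<in>S. (\<Sum>p\<in>S. B s p * L p t) = (if s = t then 1 else 0)"
    and KC: "\<forall>r\<in>J. \<forall>q\<in>J. (\<Sum>p\<in>J. K r p * C p q) = (if r = q then 1 else 0)"
    and Cdef: "\<And>x y. C x y = L x y - (\<Sum>k\<in>S. \<Sum>l\<in>S. L x k * B k l * L l y)"
    and E: "\<forall>p\<in>S \<union> J. (\<Sum>q\<in>S \<union> J. L p q * Hv q) = - L p ib"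
  shows "C ia ib - (\<Sum>k\<in>J. \<Sum>l\<in>J. C ia k * K k l * C l ib) = L ia ib + (\<Sum>q\<in>S \<union> J. L ia q * Hv q)"
proof -
  have split: "\<And>F. (\<Sum>q\<in>S \<union> J. F q) = (\<Sum>q\<in>S. F q) + (\<Sum>q\<in>J. F q)"
    using fS fJ disj by (simp add: sum.union_disjoint)
  define R where "R p = L p ib + (\<Sum>q\<in>J. L p q * Hv q)" for p
  have ES: "(\<Sum>t\<in>S. L p t * Hv t) = - R p" if "p \<in> S" for p
    using E that split[of "\<lambda>q. L p q * Hv q"] unfolding R_def by auto
  have HS: "Hv s = - (\<Sum>p\<in>S. B s p * R p)" if s: "s \<in> S" for s
  proof -
    have "Hv s = (\<Sum>t\<in>S. (if s = t then 1 else 0) * Hv t)"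
      using s fS by (simp add: delta_sum)
    also have "\<dots> = (\<Sum>t\<in>S. (\<Sum>p\<in>S. B s p * L p t) * Hv t)"
      using BL s by simp
    also have "\<dots> = (\<Sum>p\<in>S. B s p * (\<Sum>t\<in>S. L p t * Hv t))"
      by (simp add: sum_distrib_left sum_distrib_right mult.assoc) (rule sum.swap)
    also have "\<dots> = (\<Sum>p\<in>S. B s p * (- R p))"
      using ES by simp
    finally show ?thesis by (simp add: sum_negf)
  qed
  have sub: "(\<Sum>k\<in>S. L x k * Hv k) = - (\<Sum>l\<in>S. (\<Sum>k\<in>S. L x k * B k l) * R l)" for x
  proof -
    have "(\<Sum>k\<in>S. L x k * Hv k) = (\<Sum>k\<in>S. L x k * (- (\<Sum>l\<in>S. B k l * R l)))"
      using HS by simp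
    also have "\<dots> = - (\<Sum>l\<in>S. (\<Sum>k\<in>S. L x k * B k l) * R l)"
      by (simp add: sum_distrib_left sum_distrib_right mult.assoc sum_negf) (rule sum.swap)
    finally show ?thesis .
  qed
  have CHv: "(\<Sum>q\<in>J. C x q * Hv q) = (\<Sum>q\<in>J. L x q * Hv q)
      - (\<Sum>l\<in>S. (\<Sum>k\<in>S. L x k * B k l) * (\<Sum>q\<in>J. L l q * Hv q))" for x
  proof -
    have "(\<Sum>q\<in>J. C x q * Hv q) = (\<Sum>q\<in>J. L x q * Hv q)
      - (\<Sum>q\<in>J. (\<Sum>k\<in>S. \<Sum>l\<in>S. L x k * B k l * L l q) * Hv q)"
      unfolding Cdef by (simp add: left_diff_distrib sum_subtractf)
    also have "(\<Sum>q\<in>J. (\<Sum>k\<in>S. \<Sum>l\<in>S. L x k * B k l * L l q) * Hv q)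
       = (\<Sum>l\<in>S. (\<Sum>k\<in>S. L x k * B k l) * (\<Sum>q\<in>J. L l q * Hv q))"
      by (simp add: sum_distrib_left sum_distrib_right mult.assoc swap3) (rule sum.cong[OF refl], rule sum.swap)
    finally show ?thesis .
  qed
  have Cib: "C x ib = L x ib - (\<Sum>l\<in>S. (\<Sum>k\<in>S. L x k * B k l) * L l ib)" for x
    unfolding Cdef by (simp add: sum_distrib_right) (rule sum.swap)
  have rsplit: "(\<Sum>l\<in>S. (\<Sum>k\<in>S. L p k * B k l) * R l) = (\<Sum>l\<in>S. (\<Sum>k\<in>S. L p k * B k l) * L l ib)
     + (\<Sum>l\<in>S. (\<Sum>k\<in>S. L p k * B k l) * (\<Sum>q\<in>J. L l q * Hv q))" for p
    by (simp add: R_def distrib_left sum.distrib)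
  have HJ: "(\<Sum>q\<in>J. C p q * Hv q) = - C p ib" if p: "p \<in> J" for p
  proof -
    have "(\<Sum>q\<in>S. L p q * Hv q) + (\<Sum>q\<in>J. L p q * Hv q) = - L p ib"
      using E p split[of "\<lambda>q. L p q * Hv q"] by auto
    then show ?thesis
      unfolding CHv Cib using sub[of p] rsplit[of p] by linarith
  qed
  have HJ': "Hv r = - (\<Sum>p\<in>J. K r p * C p ib)" if r: "r \<in> J" for r
  proof -
    have "Hv r = (\<Sum>t\<in>J. (if r = t then 1 else 0) * Hv t)"
      using r fJ by (simp add: delta_sum)
    also have "\<dots> = (\<Sum>t\<in>J. (\<Sum>p\<in>J. K r p * C p t) * Hv t)"
      using KC r by simp
    also have "\<dots> = (\<Sum>p\<in>J. K r p * (\<Sum>t\<in>J. C p t * Hv t))"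
      by (simp add: sum_distrib_left sum_distrib_right mult.assoc) (rule sum.swap)
    also have "\<dots> = (\<Sum>p\<in>J. K r p * (- C p ib))"
      using HJ by simp
    finally show ?thesis by (simp add: sum_negf)
  qed
  have "L ia ib + (\<Sum>q\<in>S \<union> J. L ia q * Hv q) = C ia ib + (\<Sum>q\<in>J. C ia q * Hv q)"
    unfolding split CHv Cib using sub[of ia] rsplit[of ia] by linarith
  also have "(\<Sum>q\<in>J. C ia q * Hv q) = - (\<Sum>k\<in>J. \<Sum>l\<in>J. C ia k * K k l * C l ib)"
    using HJ' by (simp add: sum_distrib_left mult.assoc sum_negf)
  finally show ?thesis by simp
qed


lemma schur_inj_alg:
  fixes L B C :: "'a \<Rightarrow> 'a \<Rightarrow> real" and g :: "'a \<Rightarrow> real"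
  assumes fS: "finite S" and fJ: "finite J" and disj: "S \<inter> J = {}"
    and LB: "\<forall>s\<in>S. \<forall>t\<in>S. (\<Sum>p\<in>S. L s p * B p t) = (if s = t then 1 else 0)"
    and Cdef: "\<And>x y. C x y = L x y - (\<Sum>k\<in>S. \<Sum>l\<in>S. L x k * B k l * L l y)"
    and Linj: "\<And>f. (\<forall>p\<in>S \<union> J. (\<Sum>q\<in>S \<union> J. L p q * f q) = 0) \<Longrightarrow> \<forall>q\<in>S \<union> J. f q = 0"
    and g: "\<forall>p\<in>J. (\<Sum>q\<in>J. C p q * g q) = 0"
  shows "\<forall>q\<in>J. g q = 0"
proof -
  have split: "\<And>F. (\<Sum>q\<in>S \<union> J. F q) = (\<Sum>q\<in>S. F q) + (\<Sum>q\<in>J. F q)"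
    using fS fJ disj by (simp add: sum.union_disjoint)
  define Y where "Y p = (\<Sum>r\<in>J. L p r * g r)" for p
  define f where "f q = (if q \<in> J then g q else - (\<Sum>l\<in>S. B q l * Y l))" for q
  have fS': "(\<Sum>s\<in>S. L p s * f s) = - (\<Sum>l\<in>S. (\<Sum>s\<in>S. L p s * B s l) * Y l)" for p
  proof -
    have "(\<Sum>s\<in>S. L p s * f s) = (\<Sum>s\<in>S. L p s * (- (\<Sum>l\<in>S. B s l * Y l)))"
      using disj by (intro sum.cong) (auto simp: f_def)
    also have "\<dots> = - (\<Sum>l\<in>S. (\<Sum>s\<in>S. L p s * B s l) * Y l)"
      by (simp add: sum_distrib_left sum_distrib_right mult.assoc sum_negf) (rule sum.swap)
    finally show ?thesis .
  qed
  have fJ': "(\<Sum>r\<in>J. L p r * f r) = Y p" for p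
    unfolding Y_def by (intro sum.cong) (auto simp: f_def)
  have CY: "(\<Sum>r\<in>J. C p r * g r) = Y p - (\<Sum>l\<in>S. (\<Sum>k\<in>S. L p k * B k l) * Y l)" for p
  proof -
    have "(\<Sum>r\<in>J. C p r * g r) = Y p
      - (\<Sum>r\<in>J. (\<Sum>k\<in>S. \<Sum>l\<in>S. L p k * B k l * L l r) * g r)"
      unfolding Cdef Y_def by (simp add: left_diff_distrib sum_subtractf)
    also have "(\<Sum>r\<in>J. (\<Sum>k\<in>S. \<Sum>l\<in>S. L p k * B k l * L l r) * g r)
       = (\<Sum>l\<in>S. (\<Sum>k\<in>S. L p k * B k l) * Y l)"
      unfolding Y_def
      by (simp add: sum_distrib_left sum_distrib_right mult.assoc swap3) (rule sum.cong[OF refl], rule sum.swap)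
    finally show ?thesis .
  qed
  have "\<forall>p\<in>S \<union> J. (\<Sum>q\<in>S \<union> J. L p q * f q) = 0"
  proof
    fix p assume p: "p \<in> S \<union> J"
    show "(\<Sum>q\<in>S \<union> J. L p q * f q) = 0"
    proof (cases "p \<in> S")
      case True
      have "(\<Sum>l\<in>S. (\<Sum>s\<in>S. L p s * B s l) * Y l) = (\<Sum>l\<in>S. (if p = l then 1 else 0) * Y l)"
        using LB True by (intro sum.cong) auto
      also have "\<dots> = Y p" using True fS by (simp add: delta_sum)
      finally show ?thesis unfolding split fS' fJ' by simp
    next
      case False
      then have "p \<in> J" using p by auto
      then show ?thesis unfolding split fS' fJ' using g CY[of p] by simp
    qed
  qed
  then have "\<forall>q\<in>S \<union> J. f q = 0" by (rule Linj)
  then show ?thesis unfolding f_def by (metis (no_types, lifting) UnI2)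
qed


lemma cg_basic:
  assumes "connection_graph V w d \<sigma>"
  shows "finite V" "\<And>x y. w x y = w y x" "\<And>x y. w x y \<ge> 0" "\<And>x. w x x = 0"
    "\<And>x y. x \<notin> V \<or> y \<notin> V \<Longrightarrow> w x y = 0"
    "\<And>x y. x \<in> V \<Longrightarrow> y \<in> V \<Longrightarrow> (x, y) \<in> (edges_of V w)\<^sup>*"
    "\<And>x y. w x y > 0 \<Longrightarrow> orth_mat d (\<sigma> x y)"
    "\<And>x y a b. w x y > 0 \<Longrightarrow> \<sigma> y x a b = \<sigma> x y b a"
proof -
  have h1: "finite V" and h2: "\<forall>x y. w x y = w y x" and h3: "\<forall>x y. w x y \<ge> 0"
    and h4: "\<forall>x. w x x = 0" and h5: "\<forall>x y. (x \<notin> V \<or> y \<notin> V) \<longrightarrow> w x y = 0"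
    and h6: "\<forall>x\<in>V. \<forall>y\<in>V. (x, y) \<in> (edges_of V w)\<^sup>*"
    and h7: "\<forall>x y. (x, y) \<in> edges_of V w \<longrightarrow> orth_mat d (\<sigma> x y) \<and> (\<forall>a b. \<sigma> y x a b = \<sigma> x y b a)"
    using assms unfolding connection_graph_def by blast+
  show "finite V" "\<And>x y. w x y = w y x" "\<And>x y. w x y \<ge> 0" "\<And>x. w x x = 0"
    "\<And>x y. x \<notin> V \<or> y \<notin> V \<Longrightarrow> w x y = 0"
    "\<And>x y. x \<in> V \<Longrightarrow> y \<in> V \<Longrightarrow> (x, y) \<in> (edges_of V w)\<^sup>*"
    using h1 h2 h3 h4 h5 h6 by blast+
  have e: "(x, y) \<in> edges_of V w" if "w x y > 0" for x y
  proof -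
    have "x \<in> V"
    proof (rule ccontr)
      assume "x \<notin> V" then have "w x y = 0" using h5 by blast
      with that show False by simp
    qed
    have "y \<in> V"
    proof (rule ccontr)
      assume "y \<notin> V" then have "w x y = 0" using h5 by blast
      with that show False by simp
    qed
    with \<open>x \<in> V\<close> show ?thesis using that unfolding edges_of_def by simp
  qed
  show "\<And>x y. w x y > 0 \<Longrightarrow> orth_mat d (\<sigma> x y)"
    "\<And>x y a b. w x y > 0 \<Longrightarrow> \<sigma> y x a b = \<sigma> x y b a"
    using h7 e by blast+
qed

lemma orth_norm:
  assumes "orth_mat d M"
  shows "(\<Sum>a<d. (\<Sum>b<d. M a b * v b)^2) = (\<Sum>b<d. (v b)^2)"
proof -
  have "(\<Sum>a<d. (\<Sum>b<d. M a b * v b)^2) = (\<Sum>a<d. \<Sum>b<d. \<Sum>c<d. (M a b * M a c) * (v b * v c))"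
    by (simp add: power2_eq_square sum_product mult_ac)
  also have "\<dots> = (\<Sum>b<d. \<Sum>a<d. \<Sum>c<d. (M a b * M a c) * (v b * v c))"
    by (rule sum.swap)
  also have "\<dots> = (\<Sum>b<d. \<Sum>c<d. \<Sum>a<d. (M a b * M a c) * (v b * v c))"
    by (rule sum.cong[OF refl], rule sum.swap)
  also have "\<dots> = (\<Sum>b<d. \<Sum>c<d. (if b = c then 1 else 0) * (v b * v c))"
    using assms unfolding orth_mat_def by (simp add: sum_distrib_right[symmetric])
  also have "\<dots> = (\<Sum>b<d. (v b)^2)"
    by (rule sum.cong[OF refl]) (simp add: delta_sum power2_eq_square)
  finally show ?thesis .
qed

lemma lap_entry:
  assumes "\<And>x. w x x = 0"
  shows "conn_laplacian V w \<sigma> (x, a) (y, b) = (if x = y then (if a = b then deg V w x else 0) else 0) - w x y * \<sigma> x y a b"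
  using assms unfolding conn_laplacian_def by auto

lemma lap_inj:
  assumes cg: "connection_graph V w d \<sigma>" and TV: "T \<subseteq> V" and i: "i \<in> V" "i \<notin> T"
    and f: "\<forall>p\<in>T \<times> comps d. (\<Sum>q\<in>T \<times> comps d. conn_laplacian V w \<sigma> p q * f q) = 0"
  shows "\<forall>q\<in>T \<times> comps d. f q = 0"
proof -
  note b = cg_basic[OF cg]
  let ?L = "conn_laplacian V w \<sigma>"
  have cd: "comps d = {..<d}" by (simp add: comps_def atLeast0LessThan)
  define F where "F q = (if q \<in> T \<times> comps d then f q else 0)" for q
  have finT: "finite T" using b(1) TV finite_subset by blast
  define N where "N x = (\<Sum>a<d. (F (x, a))^2)" for x
  define G where "G x y a = (\<Sum>b<d. \<sigma> x y a b * F (y, b))" for x y a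
  define P where "P x y = (\<Sum>a<d. F (x, a) * G x y a)" for x y
  define Q where "Q = (\<Sum>x\<in>V. \<Sum>a<d. F (x, a) * (\<Sum>y\<in>V. \<Sum>b<d. ?L (x, a) (y, b) * F (y, b)))"
  have inner0: "F (x, a) * (\<Sum>y\<in>V. \<Sum>b<d. ?L (x, a) (y, b) * F (y, b)) = 0" for x a
  proof (cases "(x, a) \<in> T \<times> comps d")
    case True
    have "(\<Sum>y\<in>V. \<Sum>b<d. ?L (x, a) (y, b) * F (y, b)) = (\<Sum>q\<in>V \<times> comps d. ?L (x, a) q * F q)"
      by (simp add: cd sum.cartesian_product)
    also have "\<dots> = (\<Sum>q\<in>T \<times> comps d. ?L (x, a) q * F q)"
      using TV b(1) by (intro sum.mono_neutral_right) (auto simp: F_def comps_def)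
    also have "\<dots> = (\<Sum>q\<in>T \<times> comps d. ?L (x, a) q * f q)"
      by (intro sum.cong) (auto simp: F_def)
    also have "\<dots> = 0" using f True by blast
    finally show ?thesis by simp
  next
    case False
    then have "F (x, a) = 0" unfolding F_def by auto
    then show ?thesis by simp
  qed
  have Q0: "Q = 0" unfolding Q_def inner0 by simp
  have rowx: "(\<Sum>y\<in>V. \<Sum>b<d. ?L (x, a) (y, b) * F (y, b)) = deg V w x * F (x, a) - (\<Sum>y\<in>V. w x y * G x y a)"
    if x: "x \<in> V" and a: "a < d" for x a
  proof -
    have "(\<Sum>y\<in>V. \<Sum>b<d. ?L (x, a) (y, b) * F (y, b))
        = (\<Sum>y\<in>V. \<Sum>b<d. (if x = y then (if a = b then deg V w x else 0) else 0) * F (y, b))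
          - (\<Sum>y\<in>V. \<Sum>b<d. w x y * \<sigma> x y a b * F (y, b))"
      by (simp add: lap_entry[OF b(4)] left_diff_distrib sum_subtractf)
    also have "(\<Sum>y\<in>V. \<Sum>b<d. (if x = y then (if a = b then deg V w x else 0) else 0) * F (y, b))
        = (\<Sum>y\<in>V. (if x = y then 1 else 0) * (\<Sum>b<d. (if a = b then 1 else 0) * (deg V w x * F (y, b))))"
      by (intro sum.cong refl) (auto simp: sum_distrib_left intro!: sum.cong)
    also have "\<dots> = deg V w x * F (x, a)"
      using x a b(1) by (simp add: delta_sum)
    also have "(\<Sum>y\<in>V. \<Sum>b<d. w x y * \<sigma> x y a b * F (y, b)) = (\<Sum>y\<in>V. w x y * G x y a)"
      unfolding G_def by (simp add: sum_distrib_left mult.assoc)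
    finally show ?thesis .
  qed
  have px: "(\<Sum>a<d. F (x, a) * (deg V w x * F (x, a) - (\<Sum>y\<in>V. w x y * G x y a)))
      = deg V w x * N x - (\<Sum>y\<in>V. w x y * P x y)" for x
  proof -
    have "(\<Sum>a<d. F (x, a) * (deg V w x * F (x, a) - (\<Sum>y\<in>V. w x y * G x y a)))
       = (\<Sum>a<d. deg V w x * (F (x, a))^2 - F (x, a) * (\<Sum>y\<in>V. w x y * G x y a))"
      by (rule sum.cong) (simp_all add: right_diff_distrib power2_eq_square)
    also have "\<dots> = deg V w x * N x - (\<Sum>a<d. F (x, a) * (\<Sum>y\<in>V. w x y * G x y a))"
      by (simp add: sum_subtractf N_def sum_distrib_left)
    also have "(\<Sum>a<d. F (x, a) * (\<Sum>y\<in>V. w x y * G x y a)) = (\<Sum>y\<in>V. w x y * P x y)"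
      unfolding P_def by (simp add: sum_distrib_left mult_ac) (rule sum.swap)
    finally show ?thesis .
  qed
  have Qid: "Q = (\<Sum>x\<in>V. deg V w x * N x) - (\<Sum>x\<in>V. \<Sum>y\<in>V. w x y * P x y)"
  proof -
    have "Q = (\<Sum>x\<in>V. \<Sum>a<d. F (x, a) * (deg V w x * F (x, a) - (\<Sum>y\<in>V. w x y * G x y a)))"
      unfolding Q_def by (intro sum.cong refl) (simp add: rowx)
    also have "\<dots> = (\<Sum>x\<in>V. deg V w x * N x) - (\<Sum>x\<in>V. \<Sum>y\<in>V. w x y * P x y)"
      unfolding px by (simp add: sum_subtractf)
    finally show ?thesis .
  qed
  define Z where "Z = (\<Sum>x\<in>V. \<Sum>y\<in>V. w x y * (\<Sum>a<d. (F (x, a) - G x y a)^2))"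
  have GN: "w x y * (\<Sum>a<d. (G x y a)^2) = w x y * N y" for x y
  proof (cases "w x y > 0")
    case True
    then show ?thesis unfolding G_def N_def using orth_norm[OF b(7)[OF True]] by simp
  next
    case False
    then have "w x y = 0" using b(3)[of x y] by simp
    then show ?thesis by simp
  qed
  have Zexp: "w x y * (\<Sum>a<d. (F (x, a) - G x y a)^2) = w x y * N x - 2 * (w x y * P x y) + w x y * N y" for x y
  proof -
    have "(\<Sum>a<d. (F (x, a) - G x y a)^2) = (\<Sum>a<d. (F (x, a))^2 - 2 * (F (x, a) * G x y a) + (G x y a)^2)"
      by (rule sum.cong) (simp_all add: power2_diff mult.assoc)
    also have "\<dots> = N x - 2 * P x y + (\<Sum>a<d. (G x y a)^2)"
      unfolding N_def P_def by (simp add: sum.distrib sum_subtractf sum_distrib_left)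
    finally have "(\<Sum>a<d. (F (x, a) - G x y a)^2) = N x - 2 * P x y + (\<Sum>a<d. (G x y a)^2)" .
    then have "w x y * (\<Sum>a<d. (F (x, a) - G x y a)^2) = w x y * (N x - 2 * P x y + (\<Sum>a<d. (G x y a)^2))"
      by (rule arg_cong)
    also have "\<dots> = w x y * N x - 2 * (w x y * P x y) + w x y * (\<Sum>a<d. (G x y a)^2)"
      by (simp add: algebra_simps)
    finally show ?thesis using GN[of x y] by simp
  qed
  have D1: "(\<Sum>x\<in>V. \<Sum>y\<in>V. w x y * N x) = (\<Sum>x\<in>V. deg V w x * N x)"
    unfolding deg_def by (simp add: sum_distrib_right)
  have D2: "(\<Sum>x\<in>V. \<Sum>y\<in>V. w x y * N y) = (\<Sum>x\<in>V. deg V w x * N x)"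
    unfolding deg_def by (subst sum.swap) (simp add: sum_distrib_right b(2))
  have "Z = (\<Sum>x\<in>V. \<Sum>y\<in>V. w x y * N x) - 2 * (\<Sum>x\<in>V. \<Sum>y\<in>V. w x y * P x y) + (\<Sum>x\<in>V. \<Sum>y\<in>V. w x y * N y)"
    unfolding Z_def Zexp by (simp add: sum.distrib sum_subtractf sum_distrib_left)
  then have "Z = 2 * Q" using D1 D2 Qid by linarith
  then have Z0: "Z = 0" using Q0 by simp
  have nn: "\<And>x y. 0 \<le> w x y * (\<Sum>a<d. (F (x, a) - G x y a)^2)"
    using b(3) by (simp add: sum_nonneg)
  have each: "w x y * (\<Sum>a<d. (F (x, a) - G x y a)^2) = 0" if "x \<in> V" "y \<in> V" for x y
  proof -
    have "\<forall>x\<in>V. (\<Sum>y\<in>V. w x y * (\<Sum>a<d. (F (x, a) - G x y a)^2)) = 0"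
      using Z0 unfolding Z_def using b(1) nn
      by (subst (asm) sum_nonneg_eq_0_iff) (auto intro: sum_nonneg)
    then show ?thesis using that b(1) nn by (simp add: sum_nonneg_eq_0_iff)
  qed
  have edge: "F (x, a) = G x y a" if "(x, y) \<in> edges_of V w" "a < d" for x y a
  proof -
    from that have xy: "x \<in> V" "y \<in> V" "w x y > 0" by (auto simp: edges_of_def)
    then have "(\<Sum>a<d. (F (x, a) - G x y a)^2) = 0" using each[of x y] by simp
    then have "\<forall>a\<in>{..<d}. (F (x, a) - G x y a)^2 = 0"
      by (subst (asm) sum_nonneg_eq_0_iff) auto
    then show ?thesis using that(2) by simp
  qed
  have zero: "\<forall>a<d. F (x, a) = 0" if "x \<in> V" for x
  proof -
    have "(x, i) \<in> (edges_of V w)\<^sup>*" using b(6) that i(1) by blast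
    then show ?thesis
    proof (induction rule: converse_rtrancl_induct)
      case base
      then show ?case using i(2) by (simp add: F_def)
    next
      case (step x y)
      then show ?case using edge[OF step(1)] by (simp add: G_def)
    qed
  qed
  show ?thesis
  proof
    fix q assume q: "q \<in> T \<times> comps d"
    then obtain x a where xa: "q = (x, a)" "x \<in> T" "a < d" by (auto simp: comps_def)
    have xV: "x \<in> V" using xa(2) TV by auto
    have "F (x, a) = 0" using zero[OF xV] xa(3) by blast
    then show "f q = 0" using q xa(1) by (simp add: F_def)
  qed
qed


lemma has_sum_finsum:
  fixes g :: "'k \<Rightarrow> 'a \<Rightarrow> real"
  assumes "finite K" "\<And>k. k \<in> K \<Longrightarrow> (g k has_sum s k) A"
  shows "((\<lambda>x. \<Sum>k\<in>K. g k x) has_sum (\<Sum>k\<in>K. s k)) A"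
  using assms
proof (induction K rule: finite_induct)
  case empty
  then show ?case by simp
next
  case (insert k K)
  then show ?case by (simp add: has_sum_add)
qed

lemma has_sum_finUnion:
  fixes f :: "'a \<Rightarrow> real"
  assumes "finite Y" "\<And>y. y \<in> Y \<Longrightarrow> (f has_sum s y) (B y)"
    "\<And>y z. y \<in> Y \<Longrightarrow> z \<in> Y \<Longrightarrow> y \<noteq> z \<Longrightarrow> B y \<inter> B z = {}"
  shows "(f has_sum (\<Sum>y\<in>Y. s y)) (\<Union>y\<in>Y. B y)"
  using assms
proof (induction Y rule: finite_induct)
  case empty
  then show ?case by simp
next
  case (insert y Y)
  have "(f has_sum (s y + (\<Sum>y\<in>Y. s y))) (B y \<union> (\<Union>y\<in>Y. B y))"
    using insert by (intro has_sum_Un_disjoint) auto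
  then show ?case using insert by simp
qed

lemma orth_mult:
  assumes "orth_mat d M" "orth_mat d N"
  shows "orth_mat d (\<lambda>a b. \<Sum>k<d. M a k * N k b)"
  unfolding orth_mat_def
proof (intro allI impI)
  fix a b assume a: "a < d" and b: "b < d"
  have "(\<Sum>c<d. (\<Sum>k<d. M c k * N k a) * (\<Sum>l<d. M c l * N l b))
      = (\<Sum>c<d. \<Sum>k<d. \<Sum>l<d. (M c k * M c l) * (N k a * N l b))"
    unfolding sum_product by (intro sum.cong refl) (simp add: mult_ac)
  also have "\<dots> = (\<Sum>k<d. \<Sum>c<d. \<Sum>l<d. (M c k * M c l) * (N k a * N l b))"
    by (rule sum.swap)
  also have "\<dots> = (\<Sum>k<d. \<Sum>l<d. \<Sum>c<d. (M c k * M c l) * (N k a * N l b))"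
    by (rule sum.cong[OF refl], rule sum.swap)
  also have "\<dots> = (\<Sum>k<d. \<Sum>l<d. (if k = l then 1 else 0) * (N k a * N l b))"
    using assms(1) unfolding orth_mat_def by (simp add: sum_distrib_right[symmetric])
  also have "\<dots> = (\<Sum>k<d. N k a * N k b)"
    by (rule sum.cong[OF refl]) (simp add: delta_sum)
  also have "\<dots> = (if a = b then 1 else 0)" using assms(2) a b unfolding orth_mat_def by simp
  finally show "(\<Sum>c<d. (\<Sum>k<d. M c k * N k a) * (\<Sum>l<d. M c l * N l b)) = (if a = b then 1 else 0)" .
qed

lemma orth_bound:
  assumes "orth_mat d M" "a < d" "b < d"
  shows "\<bar>M a b\<bar> \<le> 1"
proof -
  have "(M a b)^2 \<le> (\<Sum>k<d. (M k b)^2)"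
    using assms(2) by (intro member_le_sum) auto
  also have "\<dots> = 1" using assms(1,3) unfolding orth_mat_def by (simp add: power2_eq_square)
  finally show ?thesis by (simp add: abs_square_le_1)
qed

lemma deg_nonneg: "(\<And>x y. w x y \<ge> 0) \<Longrightarrow> deg V w x \<ge> 0"
  unfolding deg_def by (simp add: sum_nonneg)

lemma path_prob_nonneg: "(\<And>x y. w x y \<ge> 0) \<Longrightarrow> path_prob V w x xs \<ge> 0"
proof (induction xs arbitrary: x)
  case Nil
  then show ?case by simp
next
  case (Cons y ys)
  then show ?case using deg_nonneg[of w V x] by simp
qed

lemma pp_nonneg: "connection_graph V w d \<sigma> \<Longrightarrow> path_prob V w x xs \<ge> 0"
  by (rule path_prob_nonneg) (rule cg_basic(3))

lemma path_hol_orth: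
  assumes cg: "connection_graph V w d \<sigma>"
  shows "path_prob V w x xs \<noteq> 0 \<Longrightarrow> orth_mat d (path_hol d \<sigma> x xs)"
proof (induction xs arbitrary: x)
  case Nil
  show ?case unfolding orth_mat_def
  proof (intro allI impI)
    fix a b assume a: "a < d" and b: "b < d"
    have "(\<Sum>k<d. path_hol d \<sigma> x [] k a * path_hol d \<sigma> x [] k b)
        = (\<Sum>k<d. (if a = k then 1 else 0) * (if k = b then 1 else 0))"
      by (intro sum.cong) auto
    also have "\<dots> = (if a = b then 1 else 0)" using a by (simp add: delta_sum)
    finally show "(\<Sum>k<d. path_hol d \<sigma> x [] k a * path_hol d \<sigma> x [] k b) = (if a = b then 1 else 0)" .
  qed
next
  case (Cons y ys)
  have "w x y \<noteq> 0" "path_prob V w y ys \<noteq> 0" using Cons.prems by auto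
  then have "w x y > 0" using cg_basic(3)[OF cg, of x y] by simp
  then have "orth_mat d (\<sigma> x y)" using cg_basic(7)[OF cg] by blast
  moreover have "orth_mat d (path_hol d \<sigma> y ys)" using Cons.IH \<open>path_prob V w y ys \<noteq> 0\<close> by blast
  ultimately have "orth_mat d (\<lambda>a b. \<Sum>k<d. \<sigma> x y a k * path_hol d \<sigma> y ys k b)" by (rule orth_mult)
  then show ?case by simp
qed

lemma term_bound:
  assumes cg: "connection_graph V w d \<sigma>" and "a < d" "b < d"
  shows "\<bar>path_prob V w x xs * path_hol d \<sigma> x xs a b\<bar> \<le> path_prob V w x xs"
proof (cases "path_prob V w x xs = 0")
  case True
  then show ?thesis by simp
next
  case False
  have p: "path_prob V w x xs \<ge> 0" using pp_nonneg[OF cg] .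
  have "\<bar>path_hol d \<sigma> x xs a b\<bar> \<le> 1"
    using orth_bound[OF path_hol_orth[OF cg False] assms(2,3)] .
  have "\<bar>path_prob V w x xs * path_hol d \<sigma> x xs a b\<bar> = path_prob V w x xs * \<bar>path_hol d \<sigma> x xs a b\<bar>"
    using p by (simp add: abs_mult)
  also have "\<dots> \<le> path_prob V w x xs * 1" by (rule mult_left_mono) fact+
  finally show ?thesis by simp
qed

lemma exc_decomp:
  assumes "i \<in> V"
  shows "excursions V i = insert [i] (\<Union>y\<in>V - {i}. Cons y ` excursions V i)"
proof
  show "excursions V i \<subseteq> insert [i] (\<Union>y\<in>V - {i}. Cons y ` excursions V i)"
  proof
    fix xs assume xs: "xs \<in> excursions V i"
    then obtain y ys where xy: "xs = y # ys" unfolding excursions_def by (cases xs) auto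
    show "xs \<in> insert [i] (\<Union>y\<in>V - {i}. Cons y ` excursions V i)"
    proof (cases "ys = []")
      case True
      then show ?thesis using xs xy by (simp add: excursions_def)
    next
      case False
      then have "ys \<in> excursions V i" "y \<in> V - {i}" using xs xy by (auto simp: excursions_def)
      then show ?thesis using xy by blast
    qed
  qed
next
  show "insert [i] (\<Union>y\<in>V - {i}. Cons y ` excursions V i) \<subseteq> excursions V i"
    using assms by (auto simp: excursions_def)
qed

definition Elen :: "'v set \<Rightarrow> 'v \<Rightarrow> nat \<Rightarrow> 'v list set" where
  "Elen V i n = {xs \<in> excursions V i. length xs \<le> n}"

lemma Elen_finite: "finite V \<Longrightarrow> finite (Elen V i n)"
proof -
  assume "finite V"
  then have "finite {xs. set xs \<subseteq> V \<and> length xs \<le> n}" by (rule finite_lists_length_le)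
  then show ?thesis by (rule finite_subset[rotated]) (auto simp: Elen_def excursions_def)
qed

lemma Elen_Suc:
  assumes "i \<in> V"
  shows "Elen V i (Suc n) = insert [i] (\<Union>y\<in>V - {i}. Cons y ` Elen V i n)"
proof -
  have "Elen V i (Suc n) = {xs \<in> insert [i] (\<Union>y\<in>V - {i}. Cons y ` excursions V i). length xs \<le> Suc n}"
    unfolding Elen_def using exc_decomp[OF assms] by simp
  also have "\<dots> = insert [i] (\<Union>y\<in>V - {i}. Cons y ` Elen V i n)"
    unfolding Elen_def by auto
  finally show ?thesis .
qed

lemma prob_bound:
  assumes cg: "connection_graph V w d \<sigma>" and i: "i \<in> V"
  shows "(\<Sum>xs\<in>Elen V i n. path_prob V w x xs) \<le> 1"
proof (induction n arbitrary: x)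
  case 0
  have "Elen V i 0 = {}" by (auto simp: Elen_def excursions_def)
  then show ?case by simp
next
  case (Suc n)
  note b = cg_basic[OF cg]
  have fin: "finite (Elen V i n)" using Elen_finite[OF b(1)] .
  have notin: "[i] \<notin> (\<Union>y\<in>V - {i}. Cons y ` Elen V i n)" by auto
  have "(\<Sum>xs\<in>Elen V i (Suc n). path_prob V w x xs)
      = path_prob V w x [i] + (\<Sum>xs\<in>(\<Union>y\<in>V - {i}. Cons y ` Elen V i n). path_prob V w x xs)"
    unfolding Elen_Suc[OF i] using fin b(1) notin by (simp add: sum.insert)
  also have "(\<Sum>xs\<in>(\<Union>y\<in>V - {i}. Cons y ` Elen V i n). path_prob V w x xs)
      = (\<Sum>y\<in>V - {i}. \<Sum>xs\<in>Cons y ` Elen V i n. path_prob V w x xs)"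
    using fin b(1) by (intro sum.UNION_disjoint) auto
  also have "\<dots> = (\<Sum>y\<in>V - {i}. w x y / deg V w x * (\<Sum>ys\<in>Elen V i n. path_prob V w y ys))"
    by (intro sum.cong refl) (simp add: sum.reindex sum_distrib_left)
  also have "\<dots> \<le> (\<Sum>y\<in>V - {i}. w x y / deg V w x)"
  proof (intro sum_mono)
    fix y
    have "w x y / deg V w x \<ge> 0" using b(3) deg_nonneg[of w V x] b(3) by simp
    then show "w x y / deg V w x * (\<Sum>ys\<in>Elen V i n. path_prob V w y ys) \<le> w x y / deg V w x"
      using mult_left_mono[OF Suc.IH[of y] \<open>w x y / deg V w x \<ge> 0\<close>] by simp
  qed
  finally have "(\<Sum>xs\<in>Elen V i (Suc n). path_prob V w x xs) \<le> w x i / deg V w x + (\<Sum>y\<in>V - {i}. w x y / deg V w x)"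
    by simp
  also have "\<dots> = (\<Sum>y\<in>V. w x y / deg V w x)"
    using b(1) i by (simp add: sum.remove)
  also have "\<dots> = deg V w x / deg V w x" by (simp only: sum_divide_distrib[symmetric] deg_def)
  also have "\<dots> \<le> 1" by (cases "deg V w x = 0") auto
  finally show ?case .
qed

lemma prob_summable:
  assumes cg: "connection_graph V w d \<sigma>" and i: "i \<in> V"
  shows "(\<lambda>xs. path_prob V w x xs) summable_on excursions V i"
proof (rule nonneg_bdd_above_summable_on)
  show "\<And>xs. xs \<in> excursions V i \<Longrightarrow> 0 \<le> path_prob V w x xs"
    using pp_nonneg[OF cg] by blast
  show "bdd_above (sum (\<lambda>xs. path_prob V w x xs) ` {F. F \<subseteq> excursions V i \<and> finite F})"
  proof (rule bdd_aboveI2)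
    fix F assume F: "F \<in> {F. F \<subseteq> excursions V i \<and> finite F}"
    define n where "n = (\<Sum>xs\<in>F. length xs)"
    have sub: "F \<subseteq> Elen V i n"
      using F unfolding Elen_def n_def by (auto intro: member_le_sum)
    have "sum (\<lambda>xs. path_prob V w x xs) F \<le> (\<Sum>xs\<in>Elen V i n. path_prob V w x xs)"
      using sub Elen_finite[OF cg_basic(1)[OF cg]] pp_nonneg[OF cg]
      by (intro sum_mono2) auto
    also have "\<dots> \<le> 1" by (rule prob_bound[OF cg i])
    finally show "sum (\<lambda>xs. path_prob V w x xs) F \<le> 1" .
  qed
qed

lemma term_summable:
  assumes cg: "connection_graph V w d \<sigma>" and i: "i \<in> V" and ab: "a < d" "b < d"
  shows "(\<lambda>xs. path_prob V w x xs * path_hol d \<sigma> x xs a b) summable_on excursions V i"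
proof -
  have "(\<lambda>xs. norm (path_prob V w x xs)) summable_on excursions V i"
    using prob_summable[OF cg i] summable_on_iff_abs_summable_on_real by blast
  then have "(\<lambda>xs. norm (path_prob V w x xs * path_hol d \<sigma> x xs a b)) summable_on excursions V i"
    by (rule Infinite_Sum.abs_summable_on_comparison_test)
       (use term_bound[OF cg ab] pp_nonneg[OF cg] in auto)
  then show ?thesis using summable_on_iff_abs_summable_on_real by blast
qed

definition Hs :: "'v set \<Rightarrow> ('v \<Rightarrow> 'v \<Rightarrow> real) \<Rightarrow> nat \<Rightarrow> ('v \<Rightarrow> 'v \<Rightarrow> nat \<Rightarrow> nat \<Rightarrow> real) \<Rightarrow> 'v \<Rightarrow> 'v \<Rightarrow> nat \<Rightarrow> nat \<Rightarrow> real" where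
  "Hs V w d \<sigma> i x a b = infsum (\<lambda>xs. path_prob V w x xs * path_hol d \<sigma> x xs a b) (excursions V i)"

lemma Hs_step:
  assumes cg: "connection_graph V w d \<sigma>" and i: "i \<in> V" and ab: "a < d" "b < d"
  shows "Hs V w d \<sigma> i x a b = w x i / deg V w x * \<sigma> x i a b
     + (\<Sum>y\<in>V - {i}. \<Sum>k<d. (w x y / deg V w x * \<sigma> x y a k) * Hs V w d \<sigma> i y k b)"
proof -
  note b = cg_basic[OF cg]
  define f where "f xs = path_prob V w x xs * path_hol d \<sigma> x xs a b" for xs
  have fi: "f [i] = w x i / deg V w x * \<sigma> x i a b"
  proof -
    have "path_hol d \<sigma> x [i] a b = (\<Sum>k<d. (if b = k then 1 else 0) * \<sigma> x i a k)"
      by (simp add: mult.commute eq_commute)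
    also have "\<dots> = \<sigma> x i a b" using ab by (simp add: delta_sum)
    finally show ?thesis unfolding f_def by simp
  qed
  have part: "(f has_sum (\<Sum>k<d. (w x y / deg V w x * \<sigma> x y a k) * Hs V w d \<sigma> i y k b)) (Cons y ` excursions V i)"
    for y
  proof -
    have "((\<lambda>ys. \<Sum>k<d. (w x y / deg V w x * \<sigma> x y a k) * (path_prob V w y ys * path_hol d \<sigma> y ys k b))
        has_sum (\<Sum>k<d. (w x y / deg V w x * \<sigma> x y a k) * Hs V w d \<sigma> i y k b)) (excursions V i)"
    proof (rule has_sum_finsum)
      fix k assume k: "k \<in> {..<d}"
      show "((\<lambda>ys. (w x y / deg V w x * \<sigma> x y a k) * (path_prob V w y ys * path_hol d \<sigma> y ys k b))
          has_sum ((w x y / deg V w x * \<sigma> x y a k) * Hs V w d \<sigma> i y k b)) (excursions V i)"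
        unfolding Hs_def
        by (rule has_sum_cmult_right, rule has_sum_infsum, rule term_summable[OF cg i]) (use k ab in auto)
    qed simp
    then have "((f \<circ> Cons y) has_sum (\<Sum>k<d. (w x y / deg V w x * \<sigma> x y a k) * Hs V w d \<sigma> i y k b)) (excursions V i)"
      by (rule has_sum_cong[THEN iffD1, rotated])
         (simp add: f_def sum_distrib_left sum_distrib_right mult_ac)
    then show ?thesis by (subst has_sum_reindex) auto
  qed
  have "(f has_sum (\<Sum>y\<in>V - {i}. \<Sum>k<d. (w x y / deg V w x * \<sigma> x y a k) * Hs V w d \<sigma> i y k b))
      (\<Union>y\<in>V - {i}. Cons y ` excursions V i)"
    using b(1) part by (intro has_sum_finUnion) auto
  then have "(f has_sum (f [i] + (\<Sum>y\<in>V - {i}. \<Sum>k<d. (w x y / deg V w x * \<sigma> x y a k) * Hs V w d \<sigma> i y k b)))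
      (insert [i] (\<Union>y\<in>V - {i}. Cons y ` excursions V i))"
    by (intro has_sum_insert) auto
  then have "(f has_sum (f [i] + (\<Sum>y\<in>V - {i}. \<Sum>k<d. (w x y / deg V w x * \<sigma> x y a k) * Hs V w d \<sigma> i y k b)))
      (excursions V i)"
    using exc_decomp[OF i] by simp
  then show ?thesis unfolding Hs_def f_def[symmetric] fi by (rule infsumI)
qed


lemma pinv_char:
  fixes A :: "'a \<Rightarrow> 'a \<Rightarrow> real"
  assumes fin: "finite T"
    and inj: "\<And>f. (\<forall>p\<in>T. (\<Sum>q\<in>T. A p q * f q) = 0) \<Longrightarrow> \<forall>q\<in>T. f q = 0"
  shows "(\<forall>x\<in>T. \<forall>y\<in>T. (\<Sum>k\<in>T. A x k * pinv_on T A k y) = (if x = y then 1 else 0)) \<and>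
         (\<forall>x\<in>T. \<forall>y\<in>T. (\<Sum>k\<in>T. pinv_on T A x k * A k y) = (if x = y then 1 else 0))"
proof -
  obtain B where B: "\<forall>x y. (x \<notin> T \<or> y \<notin> T) \<longrightarrow> B x y = 0"
    "\<forall>x\<in>T. \<forall>y\<in>T. (\<Sum>k\<in>T. A x k * B k y) = (if x = y then 1 else 0)"
    "\<forall>x\<in>T. \<forall>y\<in>T. (\<Sum>k\<in>T. B x k * A k y) = (if x = y then 1 else 0)"
    using inv_exists[OF fin inj] by blast
  have "pinv_on T A = B" by (rule pinv_eq[OF fin B])
  then show ?thesis using B by simp
qed

lemma deg_cancel:
  assumes cg: "connection_graph V w d \<sigma>"
  shows "deg V w x * (w x y / deg V w x) = w x y"
proof (cases "deg V w x = 0")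
  case False
  then show ?thesis by simp
next
  case True
  note b = cg_basic[OF cg]
  have "w x y = 0"
  proof (cases "x \<in> V \<and> y \<in> V")
    case True
    have "w x y \<le> deg V w x" unfolding deg_def
      using True b(1) b(3) by (intro member_le_sum) auto
    then show ?thesis using \<open>deg V w x = 0\<close> b(3)[of x y] by simp
  next
    case False
    then show ?thesis using b(5) by blast
  qed
  then show ?thesis by simp
qed

lemma deg_Hs:
  assumes cg: "connection_graph V w d \<sigma>" and i: "i \<in> V" and ab: "a < d" "b < d"
  shows "deg V w x * Hs V w d \<sigma> i x a b = w x i * \<sigma> x i a b
     + (\<Sum>y\<in>V - {i}. \<Sum>k<d. w x y * \<sigma> x y a k * Hs V w d \<sigma> i y k b)"
proof -
  have "deg V w x * Hs V w d \<sigma> i x a b = deg V w x * (w x i / deg V w x) * \<sigma> x i a b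
     + (\<Sum>y\<in>V - {i}. \<Sum>k<d. deg V w x * (w x y / deg V w x) * \<sigma> x y a k * Hs V w d \<sigma> i y k b)"
    unfolding Hs_step[OF cg i ab] by (simp add: distrib_left sum_distrib_left mult_ac)
  also have "\<dots> = w x i * \<sigma> x i a b
     + (\<Sum>y\<in>V - {i}. \<Sum>k<d. w x y * \<sigma> x y a k * Hs V w d \<sigma> i y k b)"
    by (simp only: deg_cancel[OF cg])
  finally show ?thesis .
qed

lemma row_sum:
  assumes cg: "connection_graph V w d \<sigma>" and x: "x \<in> V" and a: "a < d"
  shows "(\<Sum>q\<in>(V - {i}) \<times> comps d. conn_laplacian V w \<sigma> (x, a) q * h (fst q) (snd q))
    = (if x \<noteq> i then deg V w x * h x a else 0) - (\<Sum>y\<in>V - {i}. \<Sum>k<d. w x y * \<sigma> x y a k * h y k)"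
proof -
  note b = cg_basic[OF cg]
  have cd: "comps d = {..<d}" by (simp add: comps_def atLeast0LessThan)
  have "(\<Sum>q\<in>(V - {i}) \<times> comps d. conn_laplacian V w \<sigma> (x, a) q * h (fst q) (snd q))
     = (\<Sum>y\<in>V - {i}. \<Sum>k<d. conn_laplacian V w \<sigma> (x, a) (y, k) * h y k)"
    by (simp add: cd sum.cartesian_product split_def)
  also have "\<dots> = (\<Sum>y\<in>V - {i}. \<Sum>k<d. (if x = y then (if a = k then deg V w x else 0) else 0) * h y k)
       - (\<Sum>y\<in>V - {i}. \<Sum>k<d. w x y * \<sigma> x y a k * h y k)"
    by (simp add: lap_entry[OF b(4)] left_diff_distrib sum_subtractf)
  also have "(\<Sum>y\<in>V - {i}. \<Sum>k<d. (if x = y then (if a = k then deg V w x else 0) else 0) * h y k)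
      = (\<Sum>y\<in>V - {i}. (if x = y then 1 else 0) * (\<Sum>k<d. (if a = k then 1 else 0) * (deg V w x * h y k)))"
    by (intro sum.cong refl) (auto simp: sum_distrib_left intro!: sum.cong)
  also have "\<dots> = (\<Sum>y\<in>V - {i}. (if x = y then 1 else 0) * (deg V w x * h y a))"
    using a by (simp add: delta_sum)
  also have "\<dots> = (if x \<noteq> i then deg V w x * h x a else 0)"
  proof (cases "x = i")
    case True
    have "(\<Sum>y\<in>V - {i}. (if x = y then 1 else 0) * (deg V w x * h y a)) = (\<Sum>y\<in>V - {i}. 0)"
      using True by (intro sum.cong) auto
    then show ?thesis using True by simp
  next
    case False
    then show ?thesis using x b(1) by (simp add: delta_sum)
  qed
  finally show ?thesis .
qed


lemma main_one:
  assumes cg: "connection_graph V w d \<sigma>" and i: "i \<in> V" and j: "j \<in> V" and ij: "i \<noteq> j"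
    and a: "a < d" and bd: "b < d"
  shows "schur ({j} \<times> comps d) (schur ((V - {i, j}) \<times> comps d) (conn_laplacian V w \<sigma>)) (i, a) (i, b)
      = deg V w i * ((if a = b then 1 else 0) - Omega1 V w d \<sigma> i a b)"
proof -
  note bs = cg_basic[OF cg]
  define L where "L = conn_laplacian V w \<sigma>"
  define S where "S = (V - {i, j}) \<times> comps d"
  define J where "J = {j} \<times> comps d"
  have fS: "finite S" unfolding S_def comps_def using bs(1) by simp
  have fJ: "finite J" unfolding J_def comps_def by simp
  have disj: "S \<inter> J = {}" unfolding S_def J_def by auto
  have SJ: "S \<union> J = (V - {i}) \<times> comps d" unfolding S_def J_def using j ij by auto
  have injS: "\<forall>q\<in>S. f q = 0" if "\<forall>p\<in>S. (\<Sum>q\<in>S. L p q * f q) = 0" for f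
    using lap_inj[OF cg _ i, of "V - {i, j}" f] that unfolding S_def L_def by auto
  have injSJ: "\<forall>q\<in>S \<union> J. f q = 0" if "\<forall>p\<in>S \<union> J. (\<Sum>q\<in>S \<union> J. L p q * f q) = 0" for f
    using lap_inj[OF cg _ i, of "V - {i}" f] that unfolding SJ L_def by auto
  define B where "B = pinv_on S L"
  have Binv: "\<forall>x\<in>S. \<forall>y\<in>S. (\<Sum>k\<in>S. L x k * B k y) = (if x = y then 1 else 0)"
     "\<forall>x\<in>S. \<forall>y\<in>S. (\<Sum>k\<in>S. B x k * L k y) = (if x = y then 1 else 0)"
    using pinv_char[OF fS injS] unfolding B_def by blast+
  define C where "C = schur S L"
  have Cdef: "\<And>x y. C x y = L x y - (\<Sum>k\<in>S. \<Sum>l\<in>S. L x k * B k l * L l y)"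
    unfolding C_def schur_def B_def by simp
  have injJ: "\<forall>q\<in>J. g q = 0" if "\<forall>p\<in>J. (\<Sum>q\<in>J. C p q * g q) = 0" for g
    by (rule schur_inj_alg[OF fS fJ disj Binv(1) Cdef injSJ that])
  define K where "K = pinv_on J C"
  have Kinv: "\<forall>x\<in>J. \<forall>y\<in>J. (\<Sum>k\<in>J. K x k * C k y) = (if x = y then 1 else 0)"
    using pinv_char[OF fJ injJ] unfolding K_def by blast
  define Hv where "Hv q = Hs V w d \<sigma> i (fst q) (snd q) b" for q
  have E: "\<forall>p\<in>S \<union> J. (\<Sum>q\<in>S \<union> J. L p q * Hv q) = - L p (i, b)"
  proof
    fix p assume p: "p \<in> S \<union> J"
    obtain x a' where xa0: "p = (x, a')" by (cases p)
    have xa: "p = (x, a')" "x \<in> V" "x \<noteq> i" "a' < d"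
      using p xa0 unfolding SJ comps_def by auto
    have "(\<Sum>q\<in>S \<union> J. L p q * Hv q)
       = deg V w x * Hs V w d \<sigma> i x a' b - (\<Sum>y\<in>V - {i}. \<Sum>k<d. w x y * \<sigma> x y a' k * Hs V w d \<sigma> i y k b)"
      unfolding SJ L_def Hv_def xa(1) using row_sum[OF cg xa(2) xa(4), where i=i and h="\<lambda>y k. Hs V w d \<sigma> i y k b"] xa(3)
      by simp
    also have "\<dots> = w x i * \<sigma> x i a' b" using deg_Hs[OF cg i xa(4) bd, of x] by simp
    also have "\<dots> = - L p (i, b)" unfolding L_def xa(1) using xa(3) by (simp add: conn_laplacian_def)
    finally show "(\<Sum>q\<in>S \<union> J. L p q * Hv q) = - L p (i, b)" .
  qed
  have "schur J C (i, a) (i, b) = C (i, a) (i, b) - (\<Sum>k\<in>J. \<Sum>l\<in>J. C (i, a) k * K k l * C l (i, b))"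
    unfolding schur_def K_def by simp
  also have "\<dots> = L (i, a) (i, b) + (\<Sum>q\<in>S \<union> J. L (i, a) q * Hv q)"
    by (rule schur_alg[OF fS fJ disj Binv(2) Kinv Cdef E])
  also have "(\<Sum>q\<in>S \<union> J. L (i, a) q * Hv q) = - (\<Sum>y\<in>V - {i}. \<Sum>k<d. w i y * \<sigma> i y a k * Hs V w d \<sigma> i y k b)"
    unfolding SJ L_def Hv_def using row_sum[OF cg i a, where i=i and h="\<lambda>y k. Hs V w d \<sigma> i y k b"] by simp
  also have "L (i, a) (i, b) = deg V w i * (if a = b then 1 else 0)"
    unfolding L_def by (simp add: conn_laplacian_def)
  also have "deg V w i * Omega1 V w d \<sigma> i a b = (\<Sum>y\<in>V - {i}. \<Sum>k<d. w i y * \<sigma> i y a k * Hs V w d \<sigma> i y k b)"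
    using deg_Hs[OF cg i a bd, of i] bs(4)[of i] unfolding Omega1_def Hs_def by simp
  then have "deg V w i * (if a = b then 1 else 0) + - (\<Sum>y\<in>V - {i}. \<Sum>k<d. w i y * \<sigma> i y a k * Hs V w d \<sigma> i y k b)
      = deg V w i * ((if a = b then 1 else 0) - Omega1 V w d \<sigma> i a b)"
    by (simp add: right_diff_distrib)
  finally show ?thesis unfolding C_def S_def J_def L_def .
qed

theorem lemma5p5:
  fixes V :: "'v set" and w :: "'v \<Rightarrow> 'v \<Rightarrow> real" and d :: nat
    and \<sigma> :: "'v \<Rightarrow> 'v \<Rightarrow> nat \<Rightarrow> nat \<Rightarrow> real" and i j :: 'v
  assumes "connection_graph V w d \<sigma>"
    and "i \<in> V" and "j \<in> V" and "i \<noteq> j"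
  shows "(\<forall>a<d. \<forall>b<d.
           schur ({j} \<times> comps d) (conductance V w d \<sigma> i j) (i, a) (i, b)
             = deg V w i * ((if a = b then 1 else 0) - Omega1 V w d \<sigma> i a b))
         \<and> (\<forall>a<d. \<forall>b<d.
           schur ({i} \<times> comps d) (conductance V w d \<sigma> i j) (j, a) (j, b)
             = deg V w j * ((if a = b then 1 else 0) - Omega1 V w d \<sigma> j a b))"
proof -
  have sw: "conductance V w d \<sigma> i j = conductance V w d \<sigma> j i"
    unfolding conductance_def by (simp add: insert_commute)
  have e: "V - {j, i} = V - {i, j}" by auto
  have A: "\<forall>a<d. \<forall>b<d.
           schur ({j} \<times> comps d) (conductance V w d \<sigma> i j) (i, a) (i, b)
             = deg V w i * ((if a = b then 1 else 0) - Omega1 V w d \<sigma> i a b)"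
    unfolding conductance_def using main_one[OF assms] by blast
  have B: "\<forall>a<d. \<forall>b<d.
           schur ({i} \<times> comps d) (conductance V w d \<sigma> i j) (j, a) (j, b)
             = deg V w j * ((if a = b then 1 else 0) - Omega1 V w d \<sigma> j a b)"
    unfolding conductance_def using main_one[OF assms(1,3,2) assms(4)[symmetric]] unfolding e by blast
  show ?thesis using A B by blast
qed

end
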